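(* Under the assumptions that $\rho^{\mathrm w}_\alpha(p_i,p_j)\in(0,\infty)$ for all $1\le i<j\le M$, $\alpha\in[0,1]$, let $w_1,\dots,w_M>0$ with $\sum_iw_i=1$ and $L^{(w)*}_{n,M}=\inf_{\delta_n}\sum_{i=1}^Mw_iL_{i,n}(\delta_n)$. Then $w_{\min}L^*_{n,M}\le L^{(w)*}_{n,M}\le w_{\max}L^*_{n,M}$ with $w_{\min}=\min_iw_i$, $w_{\max}=\max_iw_i$, and $\lim_{n\to\infty}-\frac1n\ln L^{(w)*}_{n,M}=C_M^{\mathrm w}=\min_{i<j}D_C^{\mathrm w}(\mathbb P_i,\mathbb P_j)$.
   Context: Fix $M\ge2$. Let $\mu$ be a $\sigma$-finite measure on a Polish space $\mathcal X$, $\mathbb P_1,\dots,\mathbb P_M$ probability measures with strictly positive densities $p_1,\dots,p_M$ w.r.t. $\mu$, and $\varphi\ge0$ a measurable weight with $\varphi(x_1^n)=\prod_{k=1}^n\varphi(x_k)$, $p_i(x_1^n)=\prod_kp_i(x_k)$. $\rho^{\mathrm w}_\alpha(p_i,p_j)=\int\varphi\,p_i^\alpha p_j^{1-\alpha}\,\mathrm d\mu$; $D_C^{\mathrm w}(\mathbb P_i,\mathbb P_j)=\max_{\alpha\in[0,1]}[-\ln\rho^{\mathrm w}_\alpha(p_i,p_j)]$. For measurable $\delta_n:\mathcal X^n\to\{1,\dots,M\}$, $L_{i,n}(\delta_n)=\mathbb E_{\mathbb P_i^{\otimes n}}[\varphi(X_1^n)\mathbf 1\{\delta_n(X_1^n)\ne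 i\}]$ and $L^*_{n,M}=\inf_{\delta_n}\sum_iL_{i,n}(\delta_n)$. *)

theory Defs
  imports "HOL-Analysis.Analysis" "HOL-Probability.Probability"
begin

text \<open>Weighted Chernoff coefficient
  rho^w_alpha(p_i,p_j) = integral of phi * p_i^alpha * p_j^(1-alpha) d mu
  (as an extended nonnegative real, so that finiteness can be stated).\<close>
definition wrho :: "'a measure \<Rightarrow> ('a \<Rightarrow> real) \<Rightarrow> ('a \<Rightarrow> real) \<Rightarrow> ('a \<Rightarrow> real) \<Rightarrow> real \<Rightarrow> ennreal" where
  "wrho \<mu> \<phi> pa pb \<alpha> = (\<integral>\<^sup>+ x. ennreal (\<phi> x * pa x powr \<alpha> * pb x powr (1 - \<alpha>)) \<partial>\<mu>)"

definition wchernoff :: "'a measure \<Rightarrow> ('a \<Rightarrow> real) \<Rightarrow> ('a \<Rightarrow> real) \<Rightarrow> ('a \<Rightarrow> real) \<Rightarrow> real" where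
  "wchernoff \<mu> \<phi> pa pb = (SUP \<alpha>\<in>{0..1}. - ln (enn2real (wrho \<mu> \<phi> pa pb \<alpha>)))"

definition wCM :: "'a measure \<Rightarrow> ('a \<Rightarrow> real) \<Rightarrow> (nat \<Rightarrow> 'a \<Rightarrow> real) \<Rightarrow> nat \<Rightarrow> real" where
  "wCM \<mu> \<phi> p M = Min {wchernoff \<mu> \<phi> (p i) (p j) | i j. 1 \<le> i \<and> i < j \<and> j \<le> M}"

definition sample_space :: "'a measure \<Rightarrow> nat \<Rightarrow> (nat \<Rightarrow> 'a) measure" where
  "sample_space \<mu> n = PiM {..<n} (\<lambda>_. \<mu>)"

definition tests :: "'a measure \<Rightarrow> nat \<Rightarrow> nat \<Rightarrow> ((nat \<Rightarrow> 'a) \<Rightarrow> nat) set" where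
  "tests \<mu> M n = measurable (sample_space \<mu> n) (count_space {1..M})"

definition prodP :: "'a measure \<Rightarrow> ('a \<Rightarrow> real) \<Rightarrow> nat \<Rightarrow> (nat \<Rightarrow> 'a) measure" where
  "prodP \<mu> pa n = PiM {..<n} (\<lambda>_. density \<mu> (\<lambda>x. ennreal (pa x)))"

definition Lerr :: "'a measure \<Rightarrow> ('a \<Rightarrow> real) \<Rightarrow> (nat \<Rightarrow> 'a \<Rightarrow> real) \<Rightarrow> nat \<Rightarrow> nat \<Rightarrow> ((nat \<Rightarrow> 'a) \<Rightarrow> nat) \<Rightarrow> real" where
  "Lerr \<mu> \<phi> p i n \<delta> =
     (\<integral>x. (\<Prod>k<n. \<phi> (x k)) * (if \<delta> x \<noteq> i then 1 else 0) \<partial>(prodP \<mu> (p i) n))"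

definition Lstar_w :: "'a measure \<Rightarrow> ('a \<Rightarrow> real) \<Rightarrow> (nat \<Rightarrow> 'a \<Rightarrow> real) \<Rightarrow> nat \<Rightarrow> (nat \<Rightarrow> real) \<Rightarrow> nat \<Rightarrow> real" where
  "Lstar_w \<mu> \<phi> p M w n = (INF \<delta>\<in>tests \<mu> M n. \<Sum>i\<in>{1..M}. w i * Lerr \<mu> \<phi> p i n \<delta>)"

definition Lstar :: "'a measure \<Rightarrow> ('a \<Rightarrow> real) \<Rightarrow> (nat \<Rightarrow> 'a \<Rightarrow> real) \<Rightarrow> nat \<Rightarrow> nat \<Rightarrow> real" where
  "Lstar \<mu> \<phi> p M n = (INF \<delta>\<in>tests \<mu> M n. \<Sum>i\<in>{1..M}. Lerr \<mu> \<phi> p i n \<delta>)"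

end

theory Submission
  imports Defs
begin


lemma cosh_scale:
  fixes c u :: real assumes c0: "0 \<le> c" and c1: "c \<le> 1"
  shows "cosh (c*u) \<le> c\<^sup>2 * cosh u + (1 - c\<^sup>2)"
proof -
  have s1: "(\<lambda>n. if even n then (c*u)^n /\<^sub>R fact n else 0) sums cosh (c*u)" by (rule cosh_converges)
  have s2: "(\<lambda>n. c\<^sup>2 * (if even n then u^n /\<^sub>R fact n else 0) + (if n = 0 then 1 - c\<^sup>2 else 0)) sums (c\<^sup>2 * cosh u + (1 - c\<^sup>2))"
    by (intro sums_add sums_mult cosh_converges sums_single[of 0 "\<lambda>_. 1 - c\<^sup>2", simplified])
  show ?thesis
  proof (rule sums_le[OF _ s1 s2])
    fix n :: nat
    show "(if even n then (c*u)^n /\<^sub>R fact n else 0) \<le> c\<^sup>2 * (if even n then u^n /\<^sub>R fact n else 0) + (if n = 0 then 1 - c\<^sup>2 else 0)"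
    proof (cases "n = 0")
      case True then show ?thesis by simp
    next
      case False
      show ?thesis
      proof (cases "even n")
        case True
        with False have n2: "2 \<le> n" by (metis One_nat_def dvd_refl even_iff_mod_2_eq_zero less_2_cases not_le odd_one)
        have "c^n \<le> c^2" using power_decreasing[OF n2 c0 c1] .
        moreover have "0 \<le> u^n" using True by (simp add: zero_le_even_power)
        ultimately have "c^n * u^n \<le> c^2 * u^n" by (rule mult_right_mono)
        then show ?thesis using True False by (simp add: power_mult_distrib divide_inverse mult.assoc mult_right_mono)
      next
        case False2: False
        then show ?thesis using False by simp
      qed
    qed
  qed
qed



lemma exp_step_lemma:
  fixes Ra Rt t C k :: real
  assumes "Rt \<le> Ra + t\<^sup>2 * C" "0 < t" "t * C < Ra * k" "0 \<le> Ra"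
  shows "exp (- (t * k)) * Rt < Ra"
proof -
  have "1 + t*k \<le> exp (t*k)" by (rule exp_ge_add_one_self)
  then have "Ra + Ra*(t*k) \<le> Ra * exp (t*k)" using assms(4) by (metis distrib_left mult.right_neutral mult_left_mono)
  moreover have "t\<^sup>2 * C < Ra * (t * k)" using assms(2,3)
    by (metis mult.left_commute mult_less_cancel_left_pos power2_eq_square mult.assoc)
  ultimately have "Rt < Ra * exp (t*k)" using assms(1) by linarith
  then have "exp (- (t*k)) * Rt < exp (- (t*k)) * (Ra * exp (t*k))" by simp
  also have "\<dots> = Ra" by (simp add: exp_minus field_simps)
  finally show ?thesis .
qed

lemma endpoint_lemma:
  fixes R0 R1 \<eta> :: real
  assumes "0 < R0" "0 < R1" "0 < \<eta>"
  shows "\<exists>s. 0 < s \<and> s < 1 \<and> exp (- ((1 - s) * \<eta> / s)) * R0 < R1"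
proof -
  define K where "K = \<bar>ln (R0 / R1)\<bar> / \<eta>"
  have K0: "0 \<le> K" unfolding K_def using assms by simp
  define s where "s = 1 / (K + 2)"
  have s0: "0 < s" "s < 1" unfolding s_def using K0 by (auto simp: field_simps)
  have q: "(1 - s) / s = K + 1" unfolding s_def using K0 by (simp add: field_simps)
  have "(1 - s) * \<eta> / s = (K + 1) * \<eta>" using q by (metis times_divide_eq_left mult.commute divide_divide_eq_left' times_divide_eq_right)
  also have "\<dots> = \<bar>ln (R0 / R1)\<bar> + \<eta>" unfolding K_def using assms by (simp add: field_simps)
  finally have e: "(1 - s) * \<eta> / s = \<bar>ln (R0 / R1)\<bar> + \<eta>" .
  have "ln R0 - ln R1 < \<bar>ln (R0 / R1)\<bar> + \<eta>" using assms by (simp add: ln_div)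
  then have "ln R0 < ln R1 + ((1 - s) * \<eta> / s)" using e by linarith
  then have "exp (ln R0) < exp (ln R1 + ((1 - s) * \<eta> / s))" by simp
  then have "R0 < R1 * exp ((1 - s) * \<eta> / s)" using assms by (simp add: exp_add)
  then have "exp (- ((1 - s) * \<eta> / s)) * R0 < exp (- ((1 - s) * \<eta> / s)) * (R1 * exp ((1 - s) * \<eta> / s))"
    by simp
  also have "\<dots> = R1" by (simp add: exp_minus field_simps)
  finally show ?thesis using s0 by blast
qed

lemma key_alpha:
  fixes R :: "real \<Rightarrow> real" and \<eta> :: real
  assumes cont: "continuous_on {0..1} R"
    and pos: "\<And>\<beta>. \<beta> \<in> {0..1} \<Longrightarrow> 0 < R \<beta>"
    and SD: "\<And>\<alpha> \<delta> t. 0 < \<delta> \<Longrightarrow> 0 \<le> \<alpha> - \<delta> \<Longrightarrow> \<alpha> + \<delta> \<le> 1 \<Longrightarrow> 0 \<le> t \<Longrightarrow> t \<le> \<delta> \<Longrightarrow>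
              R (\<alpha> + t) + R (\<alpha> - t) - 2 * R \<alpha> \<le> (t / \<delta>)\<^sup>2 * (R (\<alpha> + \<delta>) + R (\<alpha> - \<delta>) - 2 * R \<alpha>)"
    and eta: "0 < \<eta>"
  shows "\<exists>\<alpha> t1 t2. 0 < \<alpha> \<and> \<alpha> < 1 \<and> 0 < t1 \<and> \<alpha> + t1 \<le> 1 \<and> 0 < t2 \<and> t2 \<le> \<alpha> \<and>
            exp (- (t1 * (\<eta> / \<alpha>))) * R (\<alpha> + t1) < R \<alpha> \<and> exp (- (t2 * (\<eta> / (1 - \<alpha>)))) * R (\<alpha> - t2) < R \<alpha>"
proof -
  obtain a where a: "a \<in> {0..1}" and amin: "\<And>y. y \<in> {0..1} \<Longrightarrow> R a \<le> R y"
    using continuous_attains_inf[OF compact_Icc _ cont] by auto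
  have Ra: "0 < R a" using pos a by blast
  consider "a = 0" | "a = 1" | "0 < a \<and> a < 1" using a by fastforce
  then show ?thesis
  proof cases
    case 3
    define \<delta> where "\<delta> = min a (1 - a)"
    have d0: "0 < \<delta>" "0 \<le> a - \<delta>" "a + \<delta> \<le> 1" using 3 unfolding \<delta>_def by auto
    define C where "C = (R (a + \<delta>) + R (a - \<delta>)) / \<delta>\<^sup>2"
    have C0: "0 \<le> C" unfolding C_def using pos d0 3 by (intro divide_nonneg_pos add_nonneg_nonneg less_imp_le) auto
    have bnd: "R (a + t) \<le> R a + t\<^sup>2 * C \<and> R (a - t) \<le> R a + t\<^sup>2 * C" if t: "0 \<le> t" "t \<le> \<delta>" for t
    proof -
      have "R (a + t) + R (a - t) - 2 * R a \<le> (t / \<delta>)\<^sup>2 * (R (a + \<delta>) + R (a - \<delta>) - 2 * R a)"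
        by (rule SD[OF d0 t])
      also have "\<dots> \<le> (t / \<delta>)\<^sup>2 * (R (a + \<delta>) + R (a - \<delta>))"
        using Ra by (intro mult_left_mono) auto
      also have "\<dots> = t\<^sup>2 * C" unfolding C_def by (simp add: power_divide)
      finally have *: "R (a + t) + R (a - t) - 2 * R a \<le> t\<^sup>2 * C" .
      have "R a \<le> R (a + t)" "R a \<le> R (a - t)" using amin t d0 by auto
      with * show ?thesis by linarith
    qed
    define \<kappa> where "\<kappa> = min (\<eta> / a) (\<eta> / (1 - a))"
    have k0: "0 < \<kappa>" unfolding \<kappa>_def using 3 eta by auto
    define t where "t = min \<delta> (R a * \<kappa> / (2 * (C + 1)))"
    have t0: "0 < t" "t \<le> \<delta>" unfolding t_def using d0 Ra k0 C0 by auto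
    have tC: "t * C < R a * \<kappa>"
    proof -
      have "t * C \<le> (R a * \<kappa> / (2 * (C + 1))) * C" unfolding t_def using C0 by (intro mult_right_mono) auto
      also have "\<dots> < R a * \<kappa>" using C0 Ra k0 by (simp add: field_simps add_nonneg_pos)
      finally show ?thesis .
    qed
    have k1: "t * C < R a * (\<eta> / a)" using tC Ra unfolding \<kappa>_def
      by (smt (verit, best) min.cobounded1 mult_left_mono)
    have k2: "t * C < R a * (\<eta> / (1 - a))" using tC Ra unfolding \<kappa>_def
      by (smt (verit, best) min.cobounded2 mult_left_mono)
    have e1: "exp (- (t * (\<eta> / a))) * R (a + t) < R a"
      by (rule exp_step_lemma[OF conjunct1[OF bnd] t0(1) k1]) (use t0 Ra in auto)
    have e2: "exp (- (t * (\<eta> / (1 - a)))) * R (a - t) < R a"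
      by (rule exp_step_lemma[OF conjunct2[OF bnd] t0(1) k2]) (use t0 Ra in auto)
    show ?thesis using 3 t0 d0 e1 e2 by (intro exI[of _ a] exI[of _ t]) auto
  next
    case 1
    have R1: "0 < R 1" using pos by auto
    obtain s where s: "0 < s" "s < 1" and es: "exp (- ((1 - s) * \<eta> / s)) * R 1 < R a"
      using endpoint_lemma[OF R1 Ra eta] by blast
    have Rs: "R 0 \<le> R s" using amin s 1 by auto
    have e2: "exp (- (s * (\<eta> / (1 - s)))) * R (s - s) < R s"
    proof -
      have "exp (- (s * (\<eta> / (1 - s)))) < 1" using s eta by simp
      then have "exp (- (s * (\<eta> / (1 - s)))) * R 0 < 1 * R 0" using Ra 1 by (intro mult_strict_right_mono) auto
      then show ?thesis using Rs by simp
    qed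
    have e1: "exp (- ((1 - s) * (\<eta> / s))) * R (s + (1 - s)) < R s"
      using es Rs 1 by (simp add: times_divide_eq_right)
    show ?thesis using s e1 e2 by (intro exI[of _ s] exI[of _ "1 - s"] exI[of _ s]) auto
  next
    case 2
    have R0: "0 < R 0" using pos by auto
    obtain s where s: "0 < s" "s < 1" and es: "exp (- ((1 - s) * \<eta> / s)) * R 0 < R a"
      using endpoint_lemma[OF R0 Ra eta] by blast
    have Rs: "R 1 \<le> R (1 - s)" using amin s 2 by auto
    have e1: "exp (- (s * (\<eta> / (1 - s)))) * R ((1 - s) + s) < R (1 - s)"
    proof -
      have "exp (- (s * (\<eta> / (1 - s)))) < 1" using s eta by simp
      then have "exp (- (s * (\<eta> / (1 - s)))) * R 1 < 1 * R 1" using Ra 2 by (intro mult_strict_right_mono) auto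
      then show ?thesis using Rs by simp
    qed
    have e2: "exp (- ((1 - s) * (\<eta> / (1 - (1 - s))))) * R ((1 - s) - (1 - s)) < R (1 - s)"
      using es Rs 2 by (simp add: times_divide_eq_right)
    show ?thesis using s e1 e2 by (intro exI[of _ "1 - s"] exI[of _ s] exI[of _ "1 - s"]) auto
  qed
qed



lemma prob_space_density_p:
  assumes pm: "pa \<in> borel_measurable \<mu>" and pp: "(\<integral>\<^sup>+x. ennreal (pa x) \<partial>\<mu>) = 1"
  shows "prob_space (density \<mu> (\<lambda>x. ennreal (pa x)))"
proof
  show "emeasure (density \<mu> (\<lambda>x. ennreal (pa x))) (space (density \<mu> (\<lambda>x. ennreal (pa x)))) = 1"
    using pp pm by (simp add: emeasure_density)
qed

lemma nn_integral_PiM_power: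
  assumes sf: "sigma_finite_measure \<mu>" and um: "u \<in> borel_measurable \<mu>"
  shows "(\<integral>\<^sup>+x. (\<Prod>k<n. u (x k)) \<partial>PiM {..<n} (\<lambda>_. \<mu>)) = (\<integral>\<^sup>+x. u x \<partial>\<mu>) ^ n"
proof -
  interpret product_sigma_finite "\<lambda>_. \<mu>" unfolding product_sigma_finite_def using sf by simp
  show ?thesis using product_nn_integral_prod[of "{..<n}" "\<lambda>_. u"] um by simp
qed

lemma prodP_density:
  assumes sf: "sigma_finite_measure \<mu>" and pm: "pa \<in> borel_measurable \<mu>"
    and pp: "(\<integral>\<^sup>+x. ennreal (pa x) \<partial>\<mu>) = 1"
  shows "prodP \<mu> pa n = density (PiM {..<n} (\<lambda>_. \<mu>)) (\<lambda>x. \<Prod>k<n. ennreal (pa (x k)))"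
proof -
  let ?D = "density \<mu> (\<lambda>x. ennreal (pa x))"
  interpret D: prob_space ?D by (rule prob_space_density_p[OF pm pp])
  interpret PD: product_sigma_finite "\<lambda>_. ?D" unfolding product_sigma_finite_def
    using D.sigma_finite_measure_axioms by simp
  interpret PM: product_sigma_finite "\<lambda>_. \<mu>" unfolding product_sigma_finite_def using sf by simp
  have "density (PiM {..<n} (\<lambda>_. \<mu>)) (\<lambda>x. \<Prod>k<n. ennreal (pa (x k))) = PiM {..<n} (\<lambda>_. ?D)"
  proof (rule PD.PiM_eqI)
    show "finite {..<n}" by simp
    show "sets (density (PiM {..<n} (\<lambda>_. \<mu>)) (\<lambda>x. \<Prod>k<n. ennreal (pa (x k)))) = sets (PiM {..<n} (\<lambda>_. ?D))"
      by (subst sets_density, rule sets_PiM_cong) auto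
  next
    fix A assume A: "\<And>i. i \<in> {..<n} \<Longrightarrow> A i \<in> sets ?D"
    then have A': "\<And>i. i \<in> {..<n} \<Longrightarrow> A i \<in> sets \<mu>" by simp
    have PiEs: "Pi\<^sub>E {..<n} A \<in> sets (PiM {..<n} (\<lambda>_. \<mu>))" using A' by (intro sets_PiM_I_finite) auto
    have "emeasure (density (PiM {..<n} (\<lambda>_. \<mu>)) (\<lambda>x. \<Prod>k<n. ennreal (pa (x k)))) (Pi\<^sub>E {..<n} A)
        = (\<integral>\<^sup>+x. (\<Prod>k<n. ennreal (pa (x k))) * indicator (Pi\<^sub>E {..<n} A) x \<partial>PiM {..<n} (\<lambda>_. \<mu>))"
      using PiEs pm by (subst emeasure_density) auto
    also have "\<dots> = (\<integral>\<^sup>+x. (\<Prod>k<n. ennreal (pa (x k)) * indicator (A k) (x k)) \<partial>PiM {..<n} (\<lambda>_. \<mu>))"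
    proof (rule nn_integral_cong)
      fix x assume x: "x \<in> space (PiM {..<n} (\<lambda>_. \<mu>))"
      have "indicator (Pi\<^sub>E {..<n} A) x = (\<Prod>k<n. indicator (A k) (x k) :: ennreal)"
      proof (cases "\<forall>k<n. x k \<in> A k")
        case True
        have "x \<in> Pi\<^sub>E {..<n} A" using True x unfolding space_PiM by (auto simp: PiE_iff)
        then show ?thesis using True by simp
      next
        case False
        then obtain k where k: "k < n" "x k \<notin> A k" by blast
        have "x \<notin> Pi\<^sub>E {..<n} A" using k by (auto simp: PiE_iff)
        moreover have "(\<Prod>k<n. indicator (A k) (x k) :: ennreal) = 0"
          using k by (intro prod_zero) (auto intro!: bexI[of _ k])
        ultimately show ?thesis by simp
      qed
      then show "(\<Prod>k<n. ennreal (pa (x k))) * indicator (Pi\<^sub>E {..<n} A) x = (\<Prod>k<n. ennreal (pa (x k)) * indicator (A k) (x k))"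
        by (simp add: prod.distrib)
    qed
    also have "\<dots> = (\<Prod>k<n. \<integral>\<^sup>+y. ennreal (pa y) * indicator (A k) y \<partial>\<mu>)"
      using A' pm by (subst PM.product_nn_integral_prod) auto
    also have "\<dots> = (\<Prod>k<n. emeasure ?D (A k))"
      using A' pm by (intro prod.cong refl) (simp add: emeasure_density)
    finally show "emeasure (density (PiM {..<n} (\<lambda>_. \<mu>)) (\<lambda>x. \<Prod>k<n. ennreal (pa (x k)))) (Pi\<^sub>E {..<n} A) = (\<Prod>k<n. emeasure ?D (A k))" .
  qed
  then show ?thesis unfolding prodP_def by simp
qed



locale chpair =
  fixes \<mu> :: "'a measure" and \<phi> pa pb :: "'a \<Rightarrow> real"
  assumes sf: "sigma_finite_measure \<mu>"
    and pam[measurable]: "pa \<in> borel_measurable \<mu>"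
    and pbm[measurable]: "pb \<in> borel_measurable \<mu>"
    and phim[measurable]: "\<phi> \<in> borel_measurable \<mu>"
    and pa_pos: "\<And>x. 0 < pa x" and pb_pos: "\<And>x. 0 < pb x" and phi_nn: "\<And>x. 0 \<le> \<phi> x"
    and fin: "\<And>\<beta>. \<beta> \<in> {0..1} \<Longrightarrow> 0 < wrho \<mu> \<phi> pa pb \<beta> \<and> wrho \<mu> \<phi> pa pb \<beta> < \<infinity>"
begin

definition h :: "real \<Rightarrow> 'a \<Rightarrow> real" where
  "h \<beta> y = \<phi> y * exp (\<beta> * ln (pa y) + (1 - \<beta>) * ln (pb y))"

definition R :: "real \<Rightarrow> real" where
  "R \<beta> = integral\<^sup>L \<mu> (h \<beta>)"

lemma h_powr: "\<phi> y * pa y powr \<beta> * pb y powr (1 - \<beta>) = h \<beta> y"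
  using pa_pos[of y] pb_pos[of y] by (simp add: h_def powr_def exp_add)

lemma h_meas[measurable]: "h \<beta> \<in> borel_measurable \<mu>"
  unfolding h_def by measurable

lemma h_nn: "0 \<le> h \<beta> y"
  unfolding h_def using phi_nn by simp

lemma h_shift: "h (\<beta> + s) y = h \<beta> y * exp (s * (ln (pa y) - ln (pb y)))"
  unfolding h_def by (simp add: exp_add[symmetric] algebra_simps)

lemma wrho_h: "wrho \<mu> \<phi> pa pb \<beta> = (\<integral>\<^sup>+y. ennreal (h \<beta> y) \<partial>\<mu>)"
  unfolding wrho_def h_powr ..

lemma h_int: assumes "\<beta> \<in> {0..1}" shows "integrable \<mu> (h \<beta>)"
  using fin[OF assms] h_nn by (intro integrableI_nonneg) (auto simp: wrho_h)

lemma wrho_R: assumes "\<beta> \<in> {0..1}" shows "wrho \<mu> \<phi> pa pb \<beta> = ennreal (R \<beta>)"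
  unfolding wrho_h R_def using h_int[OF assms] h_nn by (intro nn_integral_eq_integral) auto

lemma R_pos: assumes "\<beta> \<in> {0..1}" shows "0 < R \<beta>"
  using fin[OF assms] wrho_R[OF assms] by (metis ennreal_less_zero_iff)

lemma h_bound: assumes "\<beta> \<in> {0..1}" shows "h \<beta> y \<le> h 0 y + h 1 y"
proof -
  define m where "m = max (pa y) (pb y)"
  have m0: "0 < m" unfolding m_def using pa_pos[of y] by (simp add: less_max_iff_disj)
  have "pa y powr \<beta> \<le> m powr \<beta>" using assms pa_pos[of y] unfolding m_def by (intro powr_mono2) auto
  moreover have "pb y powr (1 - \<beta>) \<le> m powr (1 - \<beta>)" using assms pb_pos[of y] unfolding m_def by (intro powr_mono2) auto
  ultimately have "pa y powr \<beta> * pb y powr (1 - \<beta>) \<le> m powr \<beta> * m powr (1 - \<beta>)"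
    by (intro mult_mono) auto
  also have "\<dots> = m" using m0 by (simp add: powr_add[symmetric])
  also have "\<dots> \<le> pa y + pb y" unfolding m_def using pa_pos[of y] pb_pos[of y] by auto
  finally have "\<phi> y * (pa y powr \<beta> * pb y powr (1 - \<beta>)) \<le> \<phi> y * (pa y + pb y)"
    using phi_nn by (intro mult_left_mono) auto
  then show ?thesis using h_powr[of y \<beta>] h_powr[of y 0] h_powr[of y 1] pa_pos[of y] pb_pos[of y]
    by (simp add: algebra_simps)
qed

lemma R_cont: "continuous_on {0..1} R"
proof (rule continuous_on_sequentiallyI)
  fix u :: "nat \<Rightarrow> real" and a assume u: "\<forall>n. u n \<in> {0..1}" and a: "a \<in> {0..1}" and lim: "u \<longlonglongrightarrow> a"
  show "(\<lambda>n. R (u n)) \<longlonglongrightarrow> R a"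
    unfolding R_def
  proof (rule integral_dominated_convergence[where w = "\<lambda>y. h 0 y + h 1 y"])
    show "integrable \<mu> (\<lambda>y. h 0 y + h 1 y)" by (rule Bochner_Integration.integrable_add; rule h_int; simp)
    show "AE y in \<mu>. (\<lambda>n. h (u n) y) \<longlonglongrightarrow> h a y"
      unfolding h_def by (intro AE_I2 tendsto_intros lim)
    show "\<And>n. AE y in \<mu>. norm (h (u n) y) \<le> h 0 y + h 1 y"
      using u h_nn h_bound by auto
  qed auto
qed

lemma h_SD:
  assumes d: "0 < \<delta>" and t: "0 \<le> t" "t \<le> \<delta>"
  shows "h (\<alpha> + t) y + h (\<alpha> - t) y - 2 * h \<alpha> y \<le> (t / \<delta>)\<^sup>2 * (h (\<alpha> + \<delta>) y + h (\<alpha> - \<delta>) y - 2 * h \<alpha> y)"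
proof -
  define L where "L = ln (pa y) - ln (pb y)"
  define K where "K = h \<alpha> y"
  have K0: "0 \<le> K" unfolding K_def by (rule h_nn)
  have e: "h (\<alpha> + s) y + h (\<alpha> - s) y - 2 * h \<alpha> y = 2 * K * (cosh (s * L) - 1)" for s
    using h_shift[of \<alpha> s y] h_shift[of \<alpha> "-s" y] unfolding K_def L_def
    by (simp add: cosh_field_def algebra_simps)
  have c: "0 \<le> t / \<delta>" "t / \<delta> \<le> 1" using d t by auto
  have "cosh ((t / \<delta>) * (\<delta> * L)) \<le> (t / \<delta>)\<^sup>2 * cosh (\<delta> * L) + (1 - (t / \<delta>)\<^sup>2)"
    by (rule cosh_scale[OF c])
  moreover have "(t / \<delta>) * (\<delta> * L) = t * L" using d by simp
  ultimately have "cosh (t * L) - 1 \<le> (t / \<delta>)\<^sup>2 * (cosh (\<delta> * L) - 1)" by (simp add: algebra_simps)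
  then have "2 * K * (cosh (t * L) - 1) \<le> 2 * K * ((t / \<delta>)\<^sup>2 * (cosh (\<delta> * L) - 1))"
    using K0 by (intro mult_left_mono) auto
  then have "h (\<alpha> + t) y + h (\<alpha> - t) y - 2 * h \<alpha> y \<le> 2 * K * ((t / \<delta>)\<^sup>2 * (cosh (\<delta> * L) - 1))"
    using e[of t] by simp
  also have "\<dots> = (t / \<delta>)\<^sup>2 * (2 * K * (cosh (\<delta> * L) - 1))" by (simp add: algebra_simps)
  also have "\<dots> = (t / \<delta>)\<^sup>2 * (h (\<alpha> + \<delta>) y + h (\<alpha> - \<delta>) y - 2 * h \<alpha> y)" using e[of \<delta>] by simp
  finally show ?thesis .
qed

lemma R_SD:
  assumes d: "0 < \<delta>" "0 \<le> \<alpha> - \<delta>" "\<alpha> + \<delta> \<le> 1" and t: "0 \<le> t" "t \<le> \<delta>"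
  shows "R (\<alpha> + t) + R (\<alpha> - t) - 2 * R \<alpha> \<le> (t / \<delta>)\<^sup>2 * (R (\<alpha> + \<delta>) + R (\<alpha> - \<delta>) - 2 * R \<alpha>)"
proof -
  have i1: "integrable \<mu> (h (\<alpha> + t))" "integrable \<mu> (h (\<alpha> - t))" "integrable \<mu> (h \<alpha>)"
       "integrable \<mu> (h (\<alpha> + \<delta>))" "integrable \<mu> (h (\<alpha> - \<delta>))"
    using d t by (auto intro!: h_int)
  have "R (\<alpha> + t) + R (\<alpha> - t) - 2 * R \<alpha> = (\<integral>y. h (\<alpha> + t) y + h (\<alpha> - t) y - 2 * h \<alpha> y \<partial>\<mu>)"
    unfolding R_def using i1 by simp
  also have "\<dots> \<le> (\<integral>y. (t / \<delta>)\<^sup>2 * (h (\<alpha> + \<delta>) y + h (\<alpha> - \<delta>) y - 2 * h \<alpha> y) \<partial>\<mu>)"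
    using i1 d t by (intro integral_mono h_SD) auto
  also have "\<dots> = (t / \<delta>)\<^sup>2 * (R (\<alpha> + \<delta>) + R (\<alpha> - \<delta>) - 2 * R \<alpha>)"
    unfolding R_def using i1 by simp
  finally show ?thesis .
qed


definition D :: real where "D = wchernoff \<mu> \<phi> pa pb"

lemma D_attained: "\<exists>a\<in>{0..1}. R a = exp (- D) \<and> (\<forall>\<beta>\<in>{0..1}. R a \<le> R \<beta>)"
proof -
  obtain a where a: "a \<in> {0..1}" and amin: "\<And>y. y \<in> {0..1} \<Longrightarrow> R a \<le> R y"
    using continuous_attains_inf[OF compact_Icc _ R_cont] by auto
  have "D = (SUP \<beta>\<in>{0..1}. - ln (R \<beta>))"
    unfolding D_def wchernoff_def by (intro SUP_cong refl) (simp add: wrho_R R_pos less_imp_le)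
  also have "\<dots> = - ln (R a)"
  proof (rule cSup_eq_maximum)
    show "- ln (R a) \<in> (\<lambda>\<beta>. - ln (R \<beta>)) ` {0..1}" using a by auto
    fix x assume "x \<in> (\<lambda>\<beta>. - ln (R \<beta>)) ` {0..1}"
    then obtain \<beta> where b: "\<beta> \<in> {0..1}" "x = - ln (R \<beta>)" by auto
    have "ln (R a) \<le> ln (R \<beta>)" using amin[OF b(1)] R_pos[OF a] R_pos[OF b(1)] by simp
    then show "x \<le> - ln (R a)" using b by simp
  qed
  finally have "R a = exp (- D)" using R_pos[OF a] by simp
  then show ?thesis using a amin by blast
qed

lemma R_ge: assumes "\<beta> \<in> {0..1}" shows "exp (- D) \<le> R \<beta>"
  using D_attained assms by auto

lemma prod_h: "(\<Prod>k<(n::nat). h \<beta> (x k)) = (\<Prod>k<n. \<phi> (x k)) *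
   exp (\<beta> * (\<Sum>k<n. ln (pa (x k))) + (1 - \<beta>) * (\<Sum>k<n. ln (pb (x k))))"
proof -
  have "(\<Prod>k<n. h \<beta> (x k)) = (\<Prod>k<n. \<phi> (x k)) * (\<Prod>k<n. exp (\<beta> * ln (pa (x k)) + (1 - \<beta>) * ln (pb (x k))))"
    unfolding h_def prod.distrib ..
  also have "(\<Prod>k<n. exp (\<beta> * ln (pa (x k)) + (1 - \<beta>) * ln (pb (x k)))) = exp (\<Sum>k<n. (\<beta> * ln (pa (x k)) + (1 - \<beta>) * ln (pb (x k))))"
    by (simp add: Transcendental.exp_sum)
  also have "(\<Sum>k<n. (\<beta> * ln (pa (x k)) + (1 - \<beta>) * ln (pb (x k)))) = \<beta> * (\<Sum>k<n. ln (pa (x k))) + (1 - \<beta>) * (\<Sum>k<n. ln (pb (x k)))"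
    by (simp add: sum.distrib sum_distrib_left)
  finally show ?thesis .
qed

lemma prod_p: "(\<Prod>k<(n::nat). pa (x k)) = exp (\<Sum>k<n. ln (pa (x k)))" "(\<Prod>k<n. pb (x k)) = exp (\<Sum>k<n. ln (pb (x k)))"
proof -
  have "(\<Prod>k<n. pa (x k)) = (\<Prod>k<n. exp (ln (pa (x k))))" by (simp add: pa_pos)
  then show "(\<Prod>k<n. pa (x k)) = exp (\<Sum>k<n. ln (pa (x k)))" by (simp add: Transcendental.exp_sum)
  have "(\<Prod>k<n. pb (x k)) = (\<Prod>k<n. exp (ln (pb (x k))))" by (simp add: pb_pos)
  then show "(\<Prod>k<n. pb (x k)) = exp (\<Sum>k<n. ln (pb (x k)))" by (simp add: Transcendental.exp_sum)
qed

lemma int_prod_h: assumes "\<beta> \<in> {0..1}"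
  shows "(\<integral>\<^sup>+x. ennreal (\<Prod>k<n. h \<beta> (x k)) \<partial>PiM {..<(n::nat)} (\<lambda>_. \<mu>)) = ennreal (R \<beta>) ^ n"
proof -
  have "(\<integral>\<^sup>+x. ennreal (\<Prod>k<n. h \<beta> (x k)) \<partial>PiM {..<n} (\<lambda>_. \<mu>)) = (\<integral>\<^sup>+x. (\<Prod>k<n. ennreal (h \<beta> (x k))) \<partial>PiM {..<n} (\<lambda>_. \<mu>))"
    by (intro nn_integral_cong) (simp add: prod_ennreal h_nn)
  also have "\<dots> = (\<integral>\<^sup>+y. ennreal (h \<beta> y) \<partial>\<mu>) ^ n"
    by (rule nn_integral_PiM_power[OF sf]) simp
  also have "\<dots> = ennreal (R \<beta>) ^ n" using wrho_R[OF assms] wrho_h by simp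
  finally show ?thesis .
qed

end

lemma pw_ineq:
  fixes \<Phi> La Lb \<alpha> t1 t2 \<eta> :: real and n :: nat
  assumes P: "0 \<le> \<Phi>" and a: "0 < \<alpha>" "\<alpha> < 1" and t: "0 < t1" "0 < t2" and e: "0 < \<eta>"
  shows "\<Phi> * exp (\<alpha> * La + (1 - \<alpha>) * Lb) \<le> exp (real n * \<eta>) * (\<Phi> * min (exp La) (exp Lb))
     + exp (- (t1 * (\<eta> / \<alpha>))) ^ n * (\<Phi> * exp ((\<alpha> + t1) * La + (1 - (\<alpha> + t1)) * Lb))
     + exp (- (t2 * (\<eta> / (1 - \<alpha>)))) ^ n * (\<Phi> * exp ((\<alpha> - t2) * La + (1 - (\<alpha> - t2)) * Lb))"
proof -
  define B where "B = \<alpha> * La + (1 - \<alpha>) * Lb"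
  define S where "S = La - Lb"
  define N where "N = real n"
  have N0: "0 \<le> N" unfolding N_def by simp
  define T1 where "T1 = exp (real n * \<eta>) * (\<Phi> * min (exp La) (exp Lb))"
  define T2 where "T2 = exp (- (t1 * (\<eta> / \<alpha>))) ^ n * (\<Phi> * exp ((\<alpha> + t1) * La + (1 - (\<alpha> + t1)) * Lb))"
  define T3 where "T3 = exp (- (t2 * (\<eta> / (1 - \<alpha>)))) ^ n * (\<Phi> * exp ((\<alpha> - t2) * La + (1 - (\<alpha> - t2)) * Lb))"
  have T0: "0 \<le> T1" "0 \<le> T2" "0 \<le> T3" unfolding T1_def T2_def T3_def using P by auto
  have pw: "exp c ^ n = exp (c * N)" for c
    unfolding N_def by (simp add: exp_of_nat_mult[symmetric] mult.commute)
  have E2: "(\<alpha> + t1) * La + (1 - (\<alpha> + t1)) * Lb = B + t1 * S" unfolding B_def S_def by (simp add: algebra_simps)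
  have E3: "(\<alpha> - t2) * La + (1 - (\<alpha> - t2)) * Lb = B - t2 * S" unfolding B_def S_def by (simp add: algebra_simps)
  have T2e: "T2 = \<Phi> * exp (- (t1 * (\<eta> / \<alpha>)) * N + (B + t1 * S))"
    unfolding T2_def pw E2 exp_add by (simp add: ac_simps)
  have T3e: "T3 = \<Phi> * exp (- (t2 * (\<eta> / (1 - \<alpha>))) * N + (B - t2 * S))"
    unfolding T3_def pw E3 exp_add by (simp add: ac_simps)
  have T1e: "T1 = \<Phi> * min (exp (La + N * \<eta>)) (exp (Lb + N * \<eta>))"
    unfolding T1_def N_def using P by (simp add: exp_add min_mult_distrib_left algebra_simps)
  have "\<Phi> * exp B \<le> T1 + T2 + T3"
  proof (cases "N * \<eta> < \<alpha> * S")
    case True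
    then have "N * \<eta> / \<alpha> < S" using a by (simp add: pos_divide_less_eq mult.commute)
    then have "t1 * (N * \<eta> / \<alpha>) \<le> t1 * S" using t by (intro mult_left_mono) auto
    then have "B \<le> - (t1 * (\<eta> / \<alpha>)) * N + (B + t1 * S)" by (simp add: algebra_simps)
    then have "\<Phi> * exp B \<le> T2" unfolding T2e using P by (intro mult_left_mono) auto
    then show ?thesis using T0 by linarith
  next
    case F1: False
    show ?thesis
    proof (cases "(1 - \<alpha>) * S < - (N * \<eta>)")
      case True
      then have "N * \<eta> < (1 - \<alpha>) * (- S)" by simp
      then have "N * \<eta> / (1 - \<alpha>) < - S" using a by (simp add: pos_divide_less_eq mult.commute)
      then have "t2 * (N * \<eta> / (1 - \<alpha>)) \<le> t2 * (- S)" using t by (intro mult_left_mono) auto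
      then have "B \<le> - (t2 * (\<eta> / (1 - \<alpha>))) * N + (B - t2 * S)" by (simp add: algebra_simps)
      then have "\<Phi> * exp B \<le> T3" unfolding T3e using P by (intro mult_left_mono) auto
      then show ?thesis using T0 by linarith
    next
      case False
      have "B \<le> La + N * \<eta>" using False unfolding B_def S_def by (simp add: algebra_simps)
      moreover have "B \<le> Lb + N * \<eta>" using F1 unfolding B_def S_def by (simp add: algebra_simps)
      ultimately have "exp B \<le> min (exp (La + N * \<eta>)) (exp (Lb + N * \<eta>))" by simp
      then have "\<Phi> * exp B \<le> T1" unfolding T1e using P by (intro mult_left_mono) auto
      then show ?thesis using T0 by linarith
    qed
  qed
  then show ?thesis unfolding B_def T1_def T2_def T3_def by simp
qed

context chpair begin

lemma lower_bound:
  assumes eta: "0 < \<eta>"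
  shows "\<forall>\<^sub>F n in sequentially. ennreal (exp (- (real n * (D + \<eta>))) / 2) \<le>
    (\<integral>\<^sup>+x. ennreal ((\<Prod>k<n. \<phi> (x k)) * min (\<Prod>k<n. pa (x k)) (\<Prod>k<n. pb (x k))) \<partial>PiM {..<n} (\<lambda>_. \<mu>))"
proof -
  obtain \<alpha> t1 t2 where a: "0 < \<alpha>" "\<alpha> < 1" and t: "0 < t1" "\<alpha> + t1 \<le> 1" "0 < t2" "t2 \<le> \<alpha>"
    and c1: "exp (- (t1 * (\<eta> / \<alpha>))) * R (\<alpha> + t1) < R \<alpha>"
    and c2: "exp (- (t2 * (\<eta> / (1 - \<alpha>)))) * R (\<alpha> - t2) < R \<alpha>"
    using key_alpha[OF R_cont R_pos R_SD eta] by blast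
  define e1 where "e1 = exp (- (t1 * (\<eta> / \<alpha>)))"
  define e2 where "e2 = exp (- (t2 * (\<eta> / (1 - \<alpha>))))"
  define C1 where "C1 = e1 * R (\<alpha> + t1)"
  define C2 where "C2 = e2 * R (\<alpha> - t2)"
  have ab: "\<alpha> \<in> {0..1}" "\<alpha> + t1 \<in> {0..1}" "\<alpha> - t2 \<in> {0..1}" using a t by auto
  have Ra: "0 < R \<alpha>" using R_pos[OF ab(1)] .
  have C10: "0 \<le> C1" "C1 < R \<alpha>" unfolding C1_def e1_def using c1 R_pos[OF ab(2)] by auto
  have C20: "0 \<le> C2" "C2 < R \<alpha>" unfolding C2_def e2_def using c2 R_pos[OF ab(3)] by auto
  define A where "A n = (\<integral>\<^sup>+x. ennreal ((\<Prod>k<n. \<phi> (x k)) * min (\<Prod>k<n. pa (x k)) (\<Prod>k<n. pb (x k))) \<partial>PiM {..<n} (\<lambda>_. \<mu>))" for n :: nat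
  have ineq: "ennreal (R \<alpha> ^ n) \<le> ennreal (exp (real n * \<eta>)) * A n + ennreal (C1 ^ n) + ennreal (C2 ^ n)" for n :: nat
  proof -
    let ?M = "PiM {..<n} (\<lambda>_. \<mu>)"
    define G where "G x = (\<Prod>k<n. \<phi> (x k)) * min (\<Prod>k<n. pa (x k)) (\<Prod>k<n. pb (x k))" for x
    have G0: "0 \<le> G x" for x unfolding G_def using phi_nn pa_pos pb_pos
      by (intro mult_nonneg_nonneg prod_nonneg) (auto simp: less_imp_le prod_nonneg)
    have P0: "0 \<le> (\<Prod>k<n. h \<beta> (x k))" for \<beta> x by (intro prod_nonneg) (auto intro: h_nn)
    have Gm[measurable]: "(\<lambda>x. ennreal (G x)) \<in> borel_measurable ?M" unfolding G_def by measurable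
    have Pm[measurable]: "(\<lambda>x. ennreal (\<Prod>k<n. h \<beta> (x k))) \<in> borel_measurable ?M" for \<beta> by measurable
    have "ennreal (R \<alpha> ^ n) = (\<integral>\<^sup>+x. ennreal (\<Prod>k<n. h \<alpha> (x k)) \<partial>?M)"
      using int_prod_h[OF ab(1), of n] Ra by (simp add: ennreal_power)
    also have "\<dots> \<le> (\<integral>\<^sup>+x. ennreal (exp (real n * \<eta>)) * ennreal (G x) + ennreal (e1 ^ n) * ennreal (\<Prod>k<n. h (\<alpha> + t1) (x k))
                  + ennreal (e2 ^ n) * ennreal (\<Prod>k<n. h (\<alpha> - t2) (x k)) \<partial>?M)"
    proof (rule nn_integral_mono)
      fix x
      have r: "(\<Prod>k<n. h \<alpha> (x k)) \<le> exp (real n * \<eta>) * G x + e1 ^ n * (\<Prod>k<n. h (\<alpha> + t1) (x k))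
                  + e2 ^ n * (\<Prod>k<n. h (\<alpha> - t2) (x k))"
        unfolding G_def prod_h prod_p e1_def e2_def
        by (rule pw_ineq[OF prod_nonneg[OF phi_nn] a t(1) t(3) eta])
      have "ennreal (\<Prod>k<n. h \<alpha> (x k)) \<le> ennreal (exp (real n * \<eta>) * G x + e1 ^ n * (\<Prod>k<n. h (\<alpha> + t1) (x k))
                  + e2 ^ n * (\<Prod>k<n. h (\<alpha> - t2) (x k)))"
        using r by (rule ennreal_leI)
      also have "\<dots> = ennreal (exp (real n * \<eta>)) * ennreal (G x) + ennreal (e1 ^ n) * ennreal (\<Prod>k<n. h (\<alpha> + t1) (x k))
                  + ennreal (e2 ^ n) * ennreal (\<Prod>k<n. h (\<alpha> - t2) (x k))"
        using G0[of x] P0[of "\<alpha> + t1" x] P0[of "\<alpha> - t2" x] unfolding e1_def e2_def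
        by (simp add: ennreal_plus ennreal_mult add_nonneg_nonneg)
      finally show "ennreal (\<Prod>k<n. h \<alpha> (x k)) \<le> ennreal (exp (real n * \<eta>)) * ennreal (G x) + ennreal (e1 ^ n) * ennreal (\<Prod>k<n. h (\<alpha> + t1) (x k))
                  + ennreal (e2 ^ n) * ennreal (\<Prod>k<n. h (\<alpha> - t2) (x k))" .
    qed
    also have "\<dots> = (\<integral>\<^sup>+x. ennreal (exp (real n * \<eta>)) * ennreal (G x) + ennreal (e1 ^ n) * ennreal (\<Prod>k<n. h (\<alpha> + t1) (x k)) \<partial>?M)
                  + (\<integral>\<^sup>+x. ennreal (e2 ^ n) * ennreal (\<Prod>k<n. h (\<alpha> - t2) (x k)) \<partial>?M)"
      by (rule nn_integral_add; measurable)
    also have "(\<integral>\<^sup>+x. ennreal (exp (real n * \<eta>)) * ennreal (G x) + ennreal (e1 ^ n) * ennreal (\<Prod>k<n. h (\<alpha> + t1) (x k)) \<partial>?M)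
       = (\<integral>\<^sup>+x. ennreal (exp (real n * \<eta>)) * ennreal (G x) \<partial>?M) + (\<integral>\<^sup>+x. ennreal (e1 ^ n) * ennreal (\<Prod>k<n. h (\<alpha> + t1) (x k)) \<partial>?M)"
      by (rule nn_integral_add; measurable)
    also have "(\<integral>\<^sup>+x. ennreal (exp (real n * \<eta>)) * ennreal (G x) \<partial>?M) = ennreal (exp (real n * \<eta>)) * A n"
      unfolding A_def G_def[symmetric] by (rule nn_integral_cmult) measurable
    also have "(\<integral>\<^sup>+x. ennreal (e1 ^ n) * ennreal (\<Prod>k<n. h (\<alpha> + t1) (x k)) \<partial>?M) = ennreal (e1 ^ n) * ennreal (R (\<alpha> + t1)) ^ n"
      by (subst nn_integral_cmult) (measurable, simp add: int_prod_h[OF ab(2)])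
    also have "ennreal (e1 ^ n) * ennreal (R (\<alpha> + t1)) ^ n = ennreal (C1 ^ n)"
      unfolding C1_def e1_def using R_pos[OF ab(2)] by (simp add: ennreal_power ennreal_mult[symmetric] power_mult_distrib)
    also have "(\<integral>\<^sup>+x. ennreal (e2 ^ n) * ennreal (\<Prod>k<n. h (\<alpha> - t2) (x k)) \<partial>?M) = ennreal (e2 ^ n) * ennreal (R (\<alpha> - t2)) ^ n"
      by (subst nn_integral_cmult) (measurable, simp add: int_prod_h[OF ab(3)])
    also have "ennreal (e2 ^ n) * ennreal (R (\<alpha> - t2)) ^ n = ennreal (C2 ^ n)"
      unfolding C2_def e2_def using R_pos[OF ab(3)] by (simp add: ennreal_power ennreal_mult[symmetric] power_mult_distrib)
    finally show ?thesis .
  qed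
  have lim1: "(\<lambda>n. (C1 / R \<alpha>) ^ n) \<longlonglongrightarrow> 0" using C10 Ra by (intro LIMSEQ_power_zero) auto
  have lim2: "(\<lambda>n. (C2 / R \<alpha>) ^ n) \<longlonglongrightarrow> 0" using C20 Ra by (intro LIMSEQ_power_zero) auto
  have ev1: "\<forall>\<^sub>F n in sequentially. (C1 / R \<alpha>) ^ n < 1/4" by (rule order_tendstoD(2)[OF lim1]) simp
  have ev2: "\<forall>\<^sub>F n in sequentially. (C2 / R \<alpha>) ^ n < 1/4" by (rule order_tendstoD(2)[OF lim2]) simp
  show ?thesis
    using ev1 ev2
  proof eventually_elim
    case (elim n)
    have Rn: "0 < R \<alpha> ^ n" using Ra by simp
    have q1: "C1 ^ n < R \<alpha> ^ n / 4" using elim(1) Rn by (simp add: power_divide pos_divide_less_eq)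
    have q2: "C2 ^ n < R \<alpha> ^ n / 4" using elim(2) Rn by (simp add: power_divide pos_divide_less_eq)
    show ?case
    proof (cases "A n" rule: ennreal_cases)
      case top
      then show ?thesis unfolding A_def by simp
    next
      case (real a)
      have "ennreal (R \<alpha> ^ n) \<le> ennreal (exp (real n * \<eta>) * a + C1 ^ n + C2 ^ n)"
        using ineq[of n] real C10 C20 by (simp add: ennreal_plus ennreal_mult add_nonneg_nonneg)
      then have "R \<alpha> ^ n \<le> exp (real n * \<eta>) * a + C1 ^ n + C2 ^ n"
        using real C10 C20 by (subst (asm) ennreal_le_iff) (auto intro!: add_nonneg_nonneg)
      then have "R \<alpha> ^ n / 2 \<le> exp (real n * \<eta>) * a" using q1 q2 by linarith
      then have "exp (- (real n * \<eta>)) * (R \<alpha> ^ n / 2) \<le> exp (- (real n * \<eta>)) * (exp (real n * \<eta>) * a)"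
        by (intro mult_left_mono) auto
      also have "\<dots> = a" by (simp add: exp_minus field_simps)
      finally have fa: "exp (- (real n * \<eta>)) * (R \<alpha> ^ n / 2) \<le> a" .
      have "exp (- D) ^ n \<le> R \<alpha> ^ n" using R_ge[OF ab(1)] by (intro power_mono) auto
      then have "exp (- (real n * \<eta>)) * (exp (- D) ^ n / 2) \<le> exp (- (real n * \<eta>)) * (R \<alpha> ^ n / 2)"
        by (intro mult_left_mono) auto
      moreover have "exp (- (real n * (D + \<eta>))) / 2 = exp (- (real n * \<eta>)) * (exp (- D) ^ n / 2)"
        by (simp add: exp_of_nat_mult[symmetric] exp_add[symmetric] algebra_simps)
      ultimately have "exp (- (real n * (D + \<eta>))) / 2 \<le> a" using fa by linarith
      then show ?thesis unfolding A_def[symmetric] real by (rule ennreal_leI)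
    qed
  qed
qed

lemma min_le_hprod:
  assumes b: "\<beta> \<in> {0..1}"
  shows "(\<Prod>k<n. \<phi> (x k)) * min (\<Prod>k<n. pa (x k)) (\<Prod>k<n. pb (x k)) \<le> (\<Prod>k<(n::nat). \<phi> (x k) * pa (x k) powr \<beta> * pb (x k) powr (1 - \<beta>))"
proof -
  define La where "La = (\<Sum>k<n. ln (pa (x k)))"
  define Lb where "Lb = (\<Sum>k<n. ln (pb (x k)))"
  have m: "min La Lb \<le> \<beta> * La + (1 - \<beta>) * Lb"
  proof -
    have "\<beta> * min La Lb \<le> \<beta> * La" using b by (intro mult_left_mono) auto
    moreover have "(1 - \<beta>) * min La Lb \<le> (1 - \<beta>) * Lb" using b by (intro mult_left_mono) auto
    ultimately show ?thesis by (simp add: algebra_simps)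
  qed
  have "min (exp La) (exp Lb) \<le> exp (\<beta> * La + (1 - \<beta>) * Lb)"
    using m by (simp add: min_def split: if_splits)
  then have "(\<Prod>k<n. \<phi> (x k)) * min (exp La) (exp Lb) \<le> (\<Prod>k<n. \<phi> (x k)) * exp (\<beta> * La + (1 - \<beta>) * Lb)"
    using phi_nn by (intro mult_left_mono) (auto intro: prod_nonneg)
  then show ?thesis unfolding h_powr prod_h prod_p La_def Lb_def .
qed

lemma int_prod_powr:
  assumes "\<beta> \<in> {0..1}"
  shows "(\<integral>\<^sup>+x. ennreal (\<Prod>k<n. \<phi> (x k) * pa (x k) powr \<beta> * pb (x k) powr (1 - \<beta>)) \<partial>PiM {..<(n::nat)} (\<lambda>_. \<mu>)) = wrho \<mu> \<phi> pa pb \<beta> ^ n"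
  unfolding h_powr int_prod_h[OF assms] wrho_R[OF assms] ..
end



locale mainctx =
  fixes \<mu> :: "'a::polish_space measure"
    and p :: "nat \<Rightarrow> 'a \<Rightarrow> real"
    and \<phi> :: "'a \<Rightarrow> real"
    and w :: "nat \<Rightarrow> real"
    and M :: nat
  assumes M2: "M \<ge> 2"
    and sets_mu: "sets \<mu> = sets borel"
    and sfin: "sigma_finite_measure \<mu>"
    and p_meas: "\<And>i. i \<in> {1..M} \<Longrightarrow> p i \<in> borel_measurable \<mu>"
    and p_pos: "\<And>i x. i \<in> {1..M} \<Longrightarrow> p i x > 0"
    and p_prob: "\<And>i. i \<in> {1..M} \<Longrightarrow> (\<integral>\<^sup>+ x. ennreal (p i x) \<partial>\<mu>) = 1"
    and phi_meas: "\<phi> \<in> borel_measurable \<mu>"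
    and phi_nonneg: "\<And>x. \<phi> x \<ge> 0"
    and rho_fin: "\<And>i j \<alpha>. 1 \<le> i \<Longrightarrow> i < j \<Longrightarrow> j \<le> M \<Longrightarrow> \<alpha> \<in> {0..1} \<Longrightarrow>
                    0 < wrho \<mu> \<phi> (p i) (p j) \<alpha> \<and> wrho \<mu> \<phi> (p i) (p j) \<alpha> < \<infinity>"
    and w_pos: "\<And>i. i \<in> {1..M} \<Longrightarrow> w i > 0"
    and w_sum: "(\<Sum>i\<in>{1..M}. w i) = 1"
begin

lemma pair_ok: assumes "1 \<le> a" "a < b" "b \<le> M" shows "chpair \<mu> \<phi> (p a) (p b)"
  using assms by (intro chpair.intro sfin p_meas p_pos phi_meas phi_nonneg rho_fin) auto

lemma phi_p_fin: assumes i: "i \<in> {1..M}" shows "(\<integral>\<^sup>+y. ennreal (\<phi> y * p i y) \<partial>\<mu>) < \<infinity>"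
proof -
  have pM: "\<And>x. 0 < p M x" "\<And>x. 0 < p 1 x" "\<And>x. 0 < p i x" using M2 i p_pos by auto
  have pMn: "\<And>x. p M x \<noteq> 0" "\<And>x. p 1 x \<noteq> 0" "\<And>x. p i x \<noteq> 0" using pM by (metis less_irrefl)+
  show ?thesis
proof (cases "i < M")
  case True
  have "wrho \<mu> \<phi> (p i) (p M) 1 < \<infinity>" using rho_fin[of i M 1] True i by auto
  moreover have "wrho \<mu> \<phi> (p i) (p M) 1 = (\<integral>\<^sup>+y. ennreal (\<phi> y * p i y) \<partial>\<mu>)"
    unfolding wrho_def using pM pMn by (intro nn_integral_cong) (simp add: less_imp_le)
  ultimately show ?thesis by simp
next
  case False
  then have iM: "i = M" using i by auto
  have "wrho \<mu> \<phi> (p 1) (p M) 0 < \<infinity>" using rho_fin[of 1 M 0] M2 by auto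
  moreover have "wrho \<mu> \<phi> (p 1) (p M) 0 = (\<integral>\<^sup>+y. ennreal (\<phi> y * p i y) \<partial>\<mu>)"
    unfolding wrho_def iM using pM pMn by (intro nn_integral_cong) (simp add: less_imp_le)
  ultimately show ?thesis by simp
qed
qed

lemma Lerr_enn:
  assumes i: "i \<in> {1..M}" and d: "\<delta> \<in> tests \<mu> M n"
  shows "ennreal (Lerr \<mu> \<phi> p i n \<delta>) = (\<integral>\<^sup>+x. ennreal ((\<Prod>k<n. \<phi> (x k)) * (\<Prod>k<n. p i (x k)) * (if \<delta> x \<noteq> i then 1 else 0)) \<partial>PiM {..<n} (\<lambda>_. \<mu>))"
proof -
  let ?PM = "PiM {..<n} (\<lambda>_. \<mu>)"
  note [measurable] = phi_meas p_meas[OF i]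
  have dm: "\<delta> \<in> measurable ?PM (count_space {1..M})" using d unfolding tests_def sample_space_def .
  define f where "f x = (\<Prod>k<n. \<phi> (x k)) * (if \<delta> x \<noteq> i then 1 else 0)" for x
  have f0: "0 \<le> f x" for x unfolding f_def using phi_nonneg by (simp add: prod_nonneg)
  have gm: "(\<lambda>x. (\<lambda>j. if j \<noteq> i then 1 else 0::real) (\<delta> x)) \<in> borel_measurable ?PM"
    by (rule measurable_compose[OF dm]) simp
  have fm: "f \<in> borel_measurable ?PM" unfolding f_def
    by (rule borel_measurable_times[OF _ gm]) measurable
  have setsP: "sets (prodP \<mu> (p i) n) = sets ?PM" unfolding prodP_def by (rule sets_PiM_cong) auto
  have fm': "f \<in> borel_measurable (prodP \<mu> (p i) n)" using fm by (simp add: measurable_cong_sets[OF setsP refl])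
  have dens: "prodP \<mu> (p i) n = density ?PM (\<lambda>x. \<Prod>k<n. ennreal (p i (x k)))"
    by (rule prodP_density[OF sfin p_meas[OF i] p_prob[OF i]])
  have "(\<integral>\<^sup>+x. ennreal (f x) \<partial>prodP \<mu> (p i) n) = (\<integral>\<^sup>+x. (\<Prod>k<n. ennreal (p i (x k))) * ennreal (f x) \<partial>?PM)"
    unfolding dens using fm by (subst nn_integral_density) auto
  also have "\<dots> = (\<integral>\<^sup>+x. ennreal ((\<Prod>k<n. \<phi> (x k)) * (\<Prod>k<n. p i (x k)) * (if \<delta> x \<noteq> i then 1 else 0)) \<partial>?PM)"
  proof (rule nn_integral_cong)
    fix x
    have "(\<Prod>k<n. ennreal (p i (x k))) = ennreal (\<Prod>k<n. p i (x k))"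
      using p_pos[OF i] by (simp add: prod_ennreal less_imp_le)
    then show "(\<Prod>k<n. ennreal (p i (x k))) * ennreal (f x) = ennreal ((\<Prod>k<n. \<phi> (x k)) * (\<Prod>k<n. p i (x k)) * (if \<delta> x \<noteq> i then 1 else 0))"
      using f0[of x] p_pos[OF i] unfolding f_def by (simp add: ennreal_mult[symmetric] prod_nonneg less_imp_le mult_ac)
  qed
  finally have eq: "(\<integral>\<^sup>+x. ennreal (f x) \<partial>prodP \<mu> (p i) n) = (\<integral>\<^sup>+x. ennreal ((\<Prod>k<n. \<phi> (x k)) * (\<Prod>k<n. p i (x k)) * (if \<delta> x \<noteq> i then 1 else 0)) \<partial>?PM)" .
  have "(\<integral>\<^sup>+x. ennreal ((\<Prod>k<n. \<phi> (x k)) * (\<Prod>k<n. p i (x k)) * (if \<delta> x \<noteq> i then 1 else 0)) \<partial>?PM)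
      \<le> (\<integral>\<^sup>+x. (\<Prod>k<n. ennreal (\<phi> (x k) * p i (x k))) \<partial>?PM)"
  proof (rule nn_integral_mono)
    fix x
    have "(\<Prod>k<n. \<phi> (x k)) * (\<Prod>k<n. p i (x k)) * (if \<delta> x \<noteq> i then 1 else 0) \<le> (\<Prod>k<n. \<phi> (x k) * p i (x k))"
      using phi_nonneg p_pos[OF i] by (simp add: prod.distrib prod_nonneg less_imp_le)
    then show "ennreal ((\<Prod>k<n. \<phi> (x k)) * (\<Prod>k<n. p i (x k)) * (if \<delta> x \<noteq> i then 1 else 0)) \<le> (\<Prod>k<n. ennreal (\<phi> (x k) * p i (x k)))"
      using phi_nonneg p_pos[OF i] by (simp add: prod_ennreal less_imp_le ennreal_leI)
  qed
  also have "\<dots> = (\<integral>\<^sup>+y. ennreal (\<phi> y * p i y) \<partial>\<mu>) ^ n"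
    by (rule nn_integral_PiM_power[OF sfin]) measurable
  also have "\<dots> < \<infinity>" using phi_p_fin[OF i] by (simp add: power_less_top_ennreal)
  finally have finite: "(\<integral>\<^sup>+x. ennreal (f x) \<partial>prodP \<mu> (p i) n) < \<infinity>" using eq by simp
  have "Lerr \<mu> \<phi> p i n \<delta> = enn2real (\<integral>\<^sup>+x. ennreal (f x) \<partial>prodP \<mu> (p i) n)"
    unfolding Lerr_def f_def[symmetric] using fm' f0 by (intro integral_eq_nn_integral) auto
  then show ?thesis using finite eq by simp
qed


definition wmin where "wmin = (MIN i\<in>{1..M}. w i)"
definition wmax where "wmax = (MAX i\<in>{1..M}. w i)"

lemma Mne: "{1..M} \<noteq> {}" using M2 by auto

lemma wmin_le: "i \<in> {1..M} \<Longrightarrow> wmin \<le> w i"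
  unfolding wmin_def by (rule Min_le) auto

lemma wmax_ge: "i \<in> {1..M} \<Longrightarrow> w i \<le> wmax"
  unfolding wmax_def by (rule Max_ge) auto

lemma wmin_pos: "0 < wmin"
proof -
  have "wmin \<in> w ` {1..M}" unfolding wmin_def using Mne by (intro Min_in) auto
  then show ?thesis using w_pos by auto
qed

lemma wmax_pos: "0 < wmax" using wmin_pos wmin_le[of 1] wmax_ge[of 1] M2 by auto

lemma w_le1: "i \<in> {1..M} \<Longrightarrow> w i \<le> 1"
  using w_sum member_le_sum[of i "{1..M}" w] w_pos by (auto intro: less_imp_le)

lemma Lerr_nn: "0 \<le> Lerr \<mu> \<phi> p i n \<delta>"
  unfolding Lerr_def using phi_nonneg by (intro Bochner_Integration.integral_nonneg) (simp add: prod_nonneg)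

lemma tests_ne: "tests \<mu> M n \<noteq> {}"
proof -
  have "(\<lambda>_. 1) \<in> tests \<mu> M n" unfolding tests_def using M2 by simp
  then show ?thesis by blast
qed

lemma bdd_S: "bdd_below ((\<lambda>\<delta>. \<Sum>i\<in>{1..M}. v i * Lerr \<mu> \<phi> p i n \<delta>) ` tests \<mu> M n)" if "\<And>i. i \<in> {1..M} \<Longrightarrow> 0 \<le> v i" for v
proof (rule bdd_belowI[of _ 0])
  fix y assume "y \<in> (\<lambda>\<delta>. \<Sum>i\<in>{1..M}. v i * Lerr \<mu> \<phi> p i n \<delta>) ` tests \<mu> M n"
  then show "0 \<le> y" using that Lerr_nn by (auto intro!: sum_nonneg mult_nonneg_nonneg)
qed

lemma Lstar_alt: "Lstar \<mu> \<phi> p M n = (INF \<delta>\<in>tests \<mu> M n. \<Sum>i\<in>{1..M}. 1 * Lerr \<mu> \<phi> p i n \<delta>)"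
  unfolding Lstar_def by simp

lemma part1: "wmin * Lstar \<mu> \<phi> p M n \<le> Lstar_w \<mu> \<phi> p M w n \<and> Lstar_w \<mu> \<phi> p M w n \<le> wmax * Lstar \<mu> \<phi> p M n"
proof
  show "wmin * Lstar \<mu> \<phi> p M n \<le> Lstar_w \<mu> \<phi> p M w n"
    unfolding Lstar_w_def
  proof (rule cINF_greatest[OF tests_ne])
    fix \<delta> assume d: "\<delta> \<in> tests \<mu> M n"
    have "Lstar \<mu> \<phi> p M n \<le> (\<Sum>i\<in>{1..M}. 1 * Lerr \<mu> \<phi> p i n \<delta>)"
      unfolding Lstar_alt by (rule cINF_lower[OF bdd_S d]) simp
    then have "wmin * Lstar \<mu> \<phi> p M n \<le> wmin * (\<Sum>i\<in>{1..M}. Lerr \<mu> \<phi> p i n \<delta>)"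
      using wmin_pos by (intro mult_left_mono) auto
    also have "\<dots> = (\<Sum>i\<in>{1..M}. wmin * Lerr \<mu> \<phi> p i n \<delta>)" by (rule sum_distrib_left)
    also have "\<dots> \<le> (\<Sum>i\<in>{1..M}. w i * Lerr \<mu> \<phi> p i n \<delta>)"
      using wmin_le Lerr_nn by (intro sum_mono mult_right_mono) auto
    finally show "wmin * Lstar \<mu> \<phi> p M n \<le> (\<Sum>i\<in>{1..M}. w i * Lerr \<mu> \<phi> p i n \<delta>)" .
  qed
next
  have "Lstar_w \<mu> \<phi> p M w n / wmax \<le> Lstar \<mu> \<phi> p M n"
    unfolding Lstar_def
  proof (rule cINF_greatest[OF tests_ne])
    fix \<delta> assume d: "\<delta> \<in> tests \<mu> M n"
    have "Lstar_w \<mu> \<phi> p M w n \<le> (\<Sum>i\<in>{1..M}. w i * Lerr \<mu> \<phi> p i n \<delta>)"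
      unfolding Lstar_w_def by (rule cINF_lower[OF bdd_S d]) (use w_pos in \<open>auto simp: less_imp_le\<close>)
    also have "\<dots> \<le> (\<Sum>i\<in>{1..M}. wmax * Lerr \<mu> \<phi> p i n \<delta>)"
      using wmax_ge Lerr_nn by (intro sum_mono mult_right_mono) auto
    also have "\<dots> = wmax * (\<Sum>i\<in>{1..M}. Lerr \<mu> \<phi> p i n \<delta>)" by (rule sum_distrib_left[symmetric])
    finally show "Lstar_w \<mu> \<phi> p M w n / wmax \<le> (\<Sum>i\<in>{1..M}. Lerr \<mu> \<phi> p i n \<delta>)"
      using wmax_pos by (simp add: divide_le_eq mult.commute)
  qed
  then show "Lstar_w \<mu> \<phi> p M w n \<le> wmax * Lstar \<mu> \<phi> p M n"
    using wmax_pos by (simp add: divide_le_eq mult.commute)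
qed

definition Pairs where "Pairs = {(i,j). 1 \<le> i \<and> i < j \<and> j \<le> M}"

lemma Pairs_fin: "finite Pairs"
  by (rule finite_subset[of _ "{1..M} \<times> {1..M}"]) (auto simp: Pairs_def)

lemma Pairs_ne: "(1, 2) \<in> Pairs" using M2 by (simp add: Pairs_def)

lemma CM_set: "{wchernoff \<mu> \<phi> (p i) (p j) | i j. 1 \<le> i \<and> i < j \<and> j \<le> M} = (\<lambda>(i,j). wchernoff \<mu> \<phi> (p i) (p j)) ` Pairs"
  unfolding Pairs_def by auto

lemma C_le: "(a, b) \<in> Pairs \<Longrightarrow> wCM \<mu> \<phi> p M \<le> wchernoff \<mu> \<phi> (p a) (p b)"
  unfolding wCM_def CM_set using Pairs_fin by (intro Min_le) auto

lemma C_attained: "\<exists>a b. (a, b) \<in> Pairs \<and> wCM \<mu> \<phi> p M = wchernoff \<mu> \<phi> (p a) (p b)"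
proof -
  have "wCM \<mu> \<phi> p M \<in> (\<lambda>(i,j). wchernoff \<mu> \<phi> (p i) (p j)) ` Pairs"
    unfolding wCM_def CM_set using Pairs_fin Pairs_ne by (intro Min_in) auto
  then show ?thesis by auto
qed

lemma Pairs_ok: "(a, b) \<in> Pairs \<Longrightarrow> chpair \<mu> \<phi> (p a) (p b)"
  unfolding Pairs_def by (auto intro: pair_ok)

lemma F_meas:
  assumes i: "i \<in> {1..M}" and d: "\<delta> \<in> tests \<mu> M n"
  shows "(\<lambda>x. ennreal ((\<Prod>k<n. \<phi> (x k)) * (\<Prod>k<n. p i (x k)) * (if \<delta> x \<noteq> i then 1 else 0))) \<in> borel_measurable (PiM {..<n} (\<lambda>_. \<mu>))"
proof -
  note [measurable] = phi_meas p_meas[OF i]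
  have dm: "\<delta> \<in> measurable (PiM {..<n} (\<lambda>_. \<mu>)) (count_space {1..M})" using d unfolding tests_def sample_space_def .
  have gm: "(\<lambda>x. (\<lambda>j. if j \<noteq> i then 1 else 0::real) (\<delta> x)) \<in> borel_measurable (PiM {..<n} (\<lambda>_. \<mu>))"
    by (rule measurable_compose[OF dm]) simp
  show ?thesis
    by (rule measurable_compose[OF _ measurable_ennreal], rule borel_measurable_times[OF _ gm]) measurable
qed

lemma lower_delta:
  assumes ab: "(a, b) \<in> Pairs" and d: "\<delta> \<in> tests \<mu> M n"
  shows "(\<integral>\<^sup>+x. ennreal ((\<Prod>k<n. \<phi> (x k)) * min (\<Prod>k<n. p a (x k)) (\<Prod>k<n. p b (x k))) \<partial>PiM {..<n} (\<lambda>_. \<mu>))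
          \<le> ennreal (Lerr \<mu> \<phi> p a n \<delta> + Lerr \<mu> \<phi> p b n \<delta>)"
proof -
  have a: "a \<in> {1..M}" and b: "b \<in> {1..M}" and ne: "a \<noteq> b" using ab unfolding Pairs_def by auto
  have pa: "\<And>x. 0 < p a x" and pb: "\<And>x. 0 < p b x" using p_pos a b by auto
  have "(\<integral>\<^sup>+x. ennreal ((\<Prod>k<n. \<phi> (x k)) * min (\<Prod>k<n. p a (x k)) (\<Prod>k<n. p b (x k))) \<partial>PiM {..<n} (\<lambda>_. \<mu>))
     \<le> (\<integral>\<^sup>+x. ennreal ((\<Prod>k<n. \<phi> (x k)) * (\<Prod>k<n. p a (x k)) * (if \<delta> x \<noteq> a then 1 else 0))
            + ennreal ((\<Prod>k<n. \<phi> (x k)) * (\<Prod>k<n. p b (x k)) * (if \<delta> x \<noteq> b then 1 else 0)) \<partial>PiM {..<n} (\<lambda>_. \<mu>))"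
  proof (rule nn_integral_mono)
    fix x
    have P0: "0 \<le> (\<Prod>k<n. \<phi> (x k))" "0 \<le> (\<Prod>k<n. p a (x k))" "0 \<le> (\<Prod>k<n. p b (x k))"
      using phi_nonneg pa pb by (auto simp: prod_nonneg less_imp_le)
    show "ennreal ((\<Prod>k<n. \<phi> (x k)) * min (\<Prod>k<n. p a (x k)) (\<Prod>k<n. p b (x k)))
       \<le> ennreal ((\<Prod>k<n. \<phi> (x k)) * (\<Prod>k<n. p a (x k)) * (if \<delta> x \<noteq> a then 1 else 0))
            + ennreal ((\<Prod>k<n. \<phi> (x k)) * (\<Prod>k<n. p b (x k)) * (if \<delta> x \<noteq> b then 1 else 0))"
    proof (cases "\<delta> x \<noteq> a")
      case True
      have "ennreal ((\<Prod>k<n. \<phi> (x k)) * min (\<Prod>k<n. p a (x k)) (\<Prod>k<n. p b (x k))) \<le> ennreal ((\<Prod>k<n. \<phi> (x k)) * (\<Prod>k<n. p a (x k)))"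
        using P0 by (intro ennreal_leI mult_left_mono) auto
      then show ?thesis using True by (simp add: add_increasing2)
    next
      case False
      then have "\<delta> x \<noteq> b" using ne by auto
      have "ennreal ((\<Prod>k<n. \<phi> (x k)) * min (\<Prod>k<n. p a (x k)) (\<Prod>k<n. p b (x k))) \<le> ennreal ((\<Prod>k<n. \<phi> (x k)) * (\<Prod>k<n. p b (x k)))"
        using P0 by (intro ennreal_leI mult_left_mono) auto
      then show ?thesis using False \<open>\<delta> x \<noteq> b\<close> by simp
    qed
  qed
  also have "\<dots> = ennreal (Lerr \<mu> \<phi> p a n \<delta>) + ennreal (Lerr \<mu> \<phi> p b n \<delta>)"
    unfolding Lerr_enn[OF a d] Lerr_enn[OF b d]
    by (rule nn_integral_add[OF F_meas[OF a d] F_meas[OF b d]])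
  also have "\<dots> = ennreal (Lerr \<mu> \<phi> p a n \<delta> + Lerr \<mu> \<phi> p b n \<delta>)"
    using Lerr_nn by (simp add: ennreal_plus)
  finally show ?thesis .
qed

lemma lower_final:
  assumes eta: "0 < \<eta>"
  shows "\<forall>\<^sub>F n in sequentially. wmin * (exp (- (real n * (wCM \<mu> \<phi> p M + \<eta>))) / 2) \<le> Lstar_w \<mu> \<phi> p M w n"
proof -
  obtain a b where ab: "(a, b) \<in> Pairs" and Ceq: "wCM \<mu> \<phi> p M = wchernoff \<mu> \<phi> (p a) (p b)"
    using C_attained by blast
  interpret P: chpair \<mu> \<phi> "p a" "p b" by (rule Pairs_ok[OF ab])
  have a: "a \<in> {1..M}" and b: "b \<in> {1..M}" and ne: "a \<noteq> b" using ab unfolding Pairs_def by auto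
  have DC: "P.D = wCM \<mu> \<phi> p M" unfolding P.D_def Ceq ..
  show ?thesis
    using P.lower_bound[OF eta]
  proof eventually_elim
    case (elim n)
    show ?case unfolding Lstar_w_def
    proof (rule cINF_greatest[OF tests_ne])
      fix \<delta> assume d: "\<delta> \<in> tests \<mu> M n"
      have "ennreal (exp (- (real n * (wCM \<mu> \<phi> p M + \<eta>))) / 2) \<le> ennreal (Lerr \<mu> \<phi> p a n \<delta> + Lerr \<mu> \<phi> p b n \<delta>)"
        using elim lower_delta[OF ab d] unfolding DC by (rule order_trans)
      then have e: "exp (- (real n * (wCM \<mu> \<phi> p M + \<eta>))) / 2 \<le> Lerr \<mu> \<phi> p a n \<delta> + Lerr \<mu> \<phi> p b n \<delta>"
        using Lerr_nn by (subst (asm) ennreal_le_iff) (auto intro: add_nonneg_nonneg)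
      have "wmin * (exp (- (real n * (wCM \<mu> \<phi> p M + \<eta>))) / 2) \<le> wmin * (Lerr \<mu> \<phi> p a n \<delta> + Lerr \<mu> \<phi> p b n \<delta>)"
        using e wmin_pos by (intro mult_left_mono) auto
      also have "\<dots> \<le> w a * Lerr \<mu> \<phi> p a n \<delta> + w b * Lerr \<mu> \<phi> p b n \<delta>"
        using wmin_le[OF a] wmin_le[OF b] Lerr_nn[of a n \<delta>] Lerr_nn[of b n \<delta>]
        by (simp add: distrib_left add_mono mult_right_mono)
      also have "\<dots> = (\<Sum>i\<in>{a, b}. w i * Lerr \<mu> \<phi> p i n \<delta>)" using ne by simp
      also have "\<dots> \<le> (\<Sum>i\<in>{1..M}. w i * Lerr \<mu> \<phi> p i n \<delta>)"
        using a b w_pos Lerr_nn by (intro sum_mono2) (auto simp: less_imp_le)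
      finally show "wmin * (exp (- (real n * (wCM \<mu> \<phi> p M + \<eta>))) / 2) \<le> (\<Sum>i\<in>{1..M}. w i * Lerr \<mu> \<phi> p i n \<delta>)" .
    qed
  qed
qed

definition \<alpha>p where "\<alpha>p a b = (SOME \<alpha>. \<alpha> \<in> {0..1} \<and> wrho \<mu> \<phi> (p a) (p b) \<alpha> = ennreal (exp (- wchernoff \<mu> \<phi> (p a) (p b))))"

lemma \<alpha>p_prop:
  assumes ab: "(a, b) \<in> Pairs"
  shows "\<alpha>p a b \<in> {0..1} \<and> wrho \<mu> \<phi> (p a) (p b) (\<alpha>p a b) = ennreal (exp (- wchernoff \<mu> \<phi> (p a) (p b)))"
proof -
  interpret P: chpair \<mu> \<phi> "p a" "p b" by (rule Pairs_ok[OF ab])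
  obtain \<alpha> where "\<alpha> \<in> {0..1}" "P.R \<alpha> = exp (- P.D)" using P.D_attained by blast
  then have "\<exists>\<alpha>. \<alpha> \<in> {0..1} \<and> wrho \<mu> \<phi> (p a) (p b) \<alpha> = ennreal (exp (- wchernoff \<mu> \<phi> (p a) (p b)))"
    using P.wrho_R unfolding P.D_def by (intro exI[of _ \<alpha>]) simp
  then show ?thesis unfolding \<alpha>p_def by (rule someI_ex)
qed

definition Hp where "Hp a b n x = (\<Prod>k<(n::nat). \<phi> (x k) * p a (x k) powr \<alpha>p a b * p b (x k) powr (1 - \<alpha>p a b))"

lemma Hp_int:
  assumes ab: "(a, b) \<in> Pairs"
  shows "(\<integral>\<^sup>+x. ennreal (Hp a b n x) \<partial>PiM {..<n} (\<lambda>_. \<mu>)) \<le> ennreal (exp (- wCM \<mu> \<phi> p M) ^ n)"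
proof -
  interpret P: chpair \<mu> \<phi> "p a" "p b" by (rule Pairs_ok[OF ab])
  have "(\<integral>\<^sup>+x. ennreal (Hp a b n x) \<partial>PiM {..<n} (\<lambda>_. \<mu>)) = ennreal (exp (- wchernoff \<mu> \<phi> (p a) (p b))) ^ n"
    unfolding Hp_def P.int_prod_powr[OF conjunct1[OF \<alpha>p_prop[OF ab]]] conjunct2[OF \<alpha>p_prop[OF ab]] ..
  also have "\<dots> = ennreal (exp (- wchernoff \<mu> \<phi> (p a) (p b)) ^ n)" by (simp add: ennreal_power)
  also have "\<dots> \<le> ennreal (exp (- wCM \<mu> \<phi> p M) ^ n)"
    using C_le[OF ab] by (intro ennreal_leI power_mono) auto
  finally show ?thesis .
qed

lemma Hp_meas:
  assumes ab: "(a, b) \<in> Pairs"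
  shows "(\<lambda>x. ennreal (Hp a b n x)) \<in> borel_measurable (PiM {..<n} (\<lambda>_. \<mu>))"
proof -
  have a: "a \<in> {1..M}" and b: "b \<in> {1..M}" using ab unfolding Pairs_def by auto
  note [measurable] = phi_meas p_meas[OF a] p_meas[OF b]
  show ?thesis unfolding Hp_def by measurable
qed

definition pp where "pp i = (if i \<in> {1..M} then p i else (\<lambda>_. 1))"

lemma pp_meas[measurable]: "pp i \<in> borel_measurable \<mu>"
  unfolding pp_def using p_meas by auto

definition dmax where "dmax n x = (LEAST i. i \<in> {1..M} \<and> (\<forall>j\<in>{1..M}. (\<Prod>k<(n::nat). pp j (x k)) \<le> (\<Prod>k<n. pp i (x k))))"

lemma dmax_prop: "dmax n x \<in> {1..M} \<and> (\<forall>j\<in>{1..M}. (\<Prod>k<n. p j (x k)) \<le> (\<Prod>k<n. p (dmax n x) (x k)))"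
proof -
  let ?Q = "\<lambda>i. \<Prod>k<n. pp i (x k)"
  let ?P = "\<lambda>i. i \<in> {1..M} \<and> (\<forall>j\<in>{1..M}. ?Q j \<le> ?Q i)"
  have "Max (?Q ` {1..M}) \<in> ?Q ` {1..M}" using Mne by (intro Max_in) auto
  then obtain i0 where i0: "i0 \<in> {1..M}" "?Q i0 = Max (?Q ` {1..M})" by auto
  have "?P i0" using i0 by auto
  then have "?P (dmax n x)" unfolding dmax_def by (rule LeastI)
  then show ?thesis unfolding pp_def by auto
qed

lemma dmax_test: "dmax n \<in> tests \<mu> M n"
proof -
  have fq: "(\<lambda>x. \<Prod>k<n. pp j (x k)) \<in> borel_measurable (PiM {..<n} (\<lambda>_. \<mu>))" for j
    by measurable
  have pm: "Measurable.pred (PiM {..<n} (\<lambda>_. \<mu>)) (\<lambda>x. (\<Prod>k<n. pp j (x k)) \<le> (\<Prod>k<n. pp i (x k)))" for i j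
    unfolding pred_def by (rule borel_measurable_le[OF fq fq])
  have pq: "Measurable.pred (PiM {..<n} (\<lambda>_. \<mu>)) (\<lambda>x. i \<in> {1..M} \<and> (\<forall>j\<in>{1..M}. (\<Prod>k<n. pp j (x k)) \<le> (\<Prod>k<n. pp i (x k))))" for i
    by (rule pred_intros_logic(3)[OF measurable_const pred_intros_finite(3)[OF finite_atLeastAtMost pm]]) simp
  have "dmax n \<in> measurable (PiM {..<n} (\<lambda>_. \<mu>)) (count_space UNIV)"
    unfolding dmax_def by (rule measurable_Least[OF pq])
  moreover have r: "\<And>x. dmax n x \<in> {1..M}" using dmax_prop by blast
  ultimately show ?thesis unfolding tests_def sample_space_def
    by (intro measurable_count_space_extend[of "{1..M}" UNIV]) (auto simp: r)
qed

lemma upper_pt: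
  assumes i: "i \<in> {1..M}"
  shows "ennreal ((\<Prod>k<n. \<phi> (x k)) * (\<Prod>k<n. p i (x k)) * (if dmax n x \<noteq> i then 1 else 0))
          \<le> (\<Sum>q\<in>Pairs. ennreal (Hp (fst q) (snd q) n x))"
proof (cases "dmax n x = i")
  case True then show ?thesis by simp
next
  case False
  define m where "m = dmax n x"
  have m: "m \<in> {1..M}" and mx: "(\<Prod>k<n. p i (x k)) \<le> (\<Prod>k<n. p m (x k))" using dmax_prop i unfolding m_def by auto
  define lo where "lo = min i m"
  define hi where "hi = max i m"
  have q: "(lo, hi) \<in> Pairs" using False i m unfolding lo_def hi_def m_def Pairs_def by auto
  interpret P: chpair \<mu> \<phi> "p lo" "p hi" by (rule Pairs_ok[OF q])
  have mm: "min (\<Prod>k<n. p i (x k)) (\<Prod>k<n. p m (x k)) = min (\<Prod>k<n. p lo (x k)) (\<Prod>k<n. p hi (x k))"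
    unfolding lo_def hi_def by (cases "i \<le> m") (auto simp: min.commute)
  have "(\<Prod>k<n. \<phi> (x k)) * (\<Prod>k<n. p i (x k)) * (if dmax n x \<noteq> i then 1 else 0)
      = (\<Prod>k<n. \<phi> (x k)) * min (\<Prod>k<n. p lo (x k)) (\<Prod>k<n. p hi (x k))"
    using False mx mm[symmetric] by (simp add: min_absorb1 m_def)
  also have "\<dots> \<le> Hp lo hi n x"
    unfolding Hp_def by (rule P.min_le_hprod[OF conjunct1[OF \<alpha>p_prop[OF q]]])
  finally have "ennreal ((\<Prod>k<n. \<phi> (x k)) * (\<Prod>k<n. p i (x k)) * (if dmax n x \<noteq> i then 1 else 0)) \<le> ennreal (Hp lo hi n x)"
    by (rule ennreal_leI)
  also have "\<dots> \<le> (\<Sum>q\<in>Pairs. ennreal (Hp (fst q) (snd q) n x))"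
    using member_le_sum[of "(lo, hi)" Pairs "\<lambda>q. ennreal (Hp (fst q) (snd q) n x)"] q Pairs_fin by simp
  finally show ?thesis .
qed

lemma upper_final: "Lstar_w \<mu> \<phi> p M w n \<le> real M * real (card Pairs) * exp (- wCM \<mu> \<phi> p M) ^ n"
proof -
  let ?E = "exp (- wCM \<mu> \<phi> p M) ^ n"
  let ?d = "dmax n"
  have d: "?d \<in> tests \<mu> M n" by (rule dmax_test)
  have "ennreal (\<Sum>i\<in>{1..M}. Lerr \<mu> \<phi> p i n ?d) = (\<Sum>i\<in>{1..M}. ennreal (Lerr \<mu> \<phi> p i n ?d))"
    using Lerr_nn by simp
  also have "\<dots> \<le> (\<Sum>i\<in>{1..M}. \<integral>\<^sup>+x. (\<Sum>q\<in>Pairs. ennreal (Hp (fst q) (snd q) n x)) \<partial>PiM {..<n} (\<lambda>_. \<mu>))"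
  proof (rule sum_mono)
    fix i assume i: "i \<in> {1..M}"
    show "ennreal (Lerr \<mu> \<phi> p i n ?d) \<le> (\<integral>\<^sup>+x. (\<Sum>q\<in>Pairs. ennreal (Hp (fst q) (snd q) n x)) \<partial>PiM {..<n} (\<lambda>_. \<mu>))"
      unfolding Lerr_enn[OF i d] by (intro nn_integral_mono upper_pt i)
  qed
  also have "\<dots> = (\<Sum>i\<in>{1..M}. \<Sum>q\<in>Pairs. \<integral>\<^sup>+x. ennreal (Hp (fst q) (snd q) n x) \<partial>PiM {..<n} (\<lambda>_. \<mu>))"
    by (intro sum.cong refl nn_integral_sum) (auto intro: Hp_meas)
  also have "\<dots> \<le> (\<Sum>i\<in>{1..M}. \<Sum>q\<in>Pairs. ennreal ?E)"
    by (intro sum_mono) (auto intro: Hp_int)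
  also have "\<dots> = of_nat M * (of_nat (card Pairs) * ennreal ?E)" by simp
  also have "\<dots> = ennreal (real M * real (card Pairs) * ?E)"
    by (simp only: ennreal_of_nat_eq_real_of_nat ennreal_mult[symmetric] of_nat_0_le_iff exp_ge_zero zero_le_power mult_nonneg_nonneg mult.assoc)
  finally have "(\<Sum>i\<in>{1..M}. Lerr \<mu> \<phi> p i n ?d) \<le> real M * real (card Pairs) * ?E"
    by (subst (asm) ennreal_le_iff) auto
  moreover have "Lstar_w \<mu> \<phi> p M w n \<le> (\<Sum>i\<in>{1..M}. w i * Lerr \<mu> \<phi> p i n ?d)"
    unfolding Lstar_w_def by (rule cINF_lower[OF bdd_S d]) (use w_pos in \<open>auto simp: less_imp_le\<close>)
  moreover have "(\<Sum>i\<in>{1..M}. w i * Lerr \<mu> \<phi> p i n ?d) \<le> (\<Sum>i\<in>{1..M}. Lerr \<mu> \<phi> p i n ?d)"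
  proof (rule sum_mono)
    fix i assume i: "i \<in> {1..M}"
    show "w i * Lerr \<mu> \<phi> p i n ?d \<le> Lerr \<mu> \<phi> p i n ?d"
      using w_le1[OF i] w_pos[OF i] Lerr_nn[of i n ?d] by (intro mult_left_le_one_le) auto
  qed
  ultimately show ?thesis by linarith
qed


lemma K_pos: "0 < real M * real (card Pairs)"
proof -
  have "card Pairs > 0" using Pairs_fin Pairs_ne by (auto simp: card_gt_0_iff)
  then show ?thesis using M2 by simp
qed

lemma limit: "(\<lambda>n. - (1 / real n) * ln (Lstar_w \<mu> \<phi> p M w n)) \<longlonglongrightarrow> wCM \<mu> \<phi> p M"
proof (rule order_tendstoI)
  define C where "C = wCM \<mu> \<phi> p M"
  define K where "K = real M * real (card Pairs)"
  have K0: "0 < K" unfolding K_def by (rule K_pos)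
  have evpos: "\<forall>\<^sub>F n in sequentially. 0 < Lstar_w \<mu> \<phi> p M w n"
    using lower_final[OF zero_less_one]
  proof eventually_elim
    case (elim n)
    have "0 < wmin * (exp (- (real n * (wCM \<mu> \<phi> p M + 1))) / 2)" using wmin_pos by simp
    then show ?case using elim by linarith
  qed
  {
    fix a assume a: "a < wCM \<mu> \<phi> p M"
    have ev1: "\<forall>\<^sub>F n in sequentially. ln K / real n < C - a"
      using order_tendstoD(2)[OF lim_const_over_n[of "ln K"], of "C - a"] a unfolding C_def by simp
    show "\<forall>\<^sub>F n in sequentially. a < - (1 / real n) * ln (Lstar_w \<mu> \<phi> p M w n)"
      using evpos ev1 eventually_gt_at_top[of 0]
    proof eventually_elim
      case (elim n)
      define L where "L = Lstar_w \<mu> \<phi> p M w n"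
      define N where "N = real n"
      have N0: "0 < N" unfolding N_def using elim by simp
      have L0: "0 < L" unfolding L_def using elim by simp
      have eN: "exp (N * (- C)) = exp (- C) ^ n" unfolding N_def by (rule exp_of_nat_mult)
      have "L \<le> K * exp (- C) ^ n" unfolding L_def K_def C_def by (rule upper_final)
      then have "L \<le> K * exp (N * (- C))" unfolding eN .
      then have "ln L \<le> ln (K * exp (N * (- C)))" using L0 K0 by simp
      also have "\<dots> = ln K - N * C" using K0 by (simp add: ln_mult)
      finally have lnL: "ln L \<le> ln K - N * C" .
      have "C - ln K / N = (N * C - ln K) / N" using N0 by (simp add: field_simps)
      also have "\<dots> \<le> (- ln L) / N" using lnL N0 by (intro divide_right_mono) auto
      also have "\<dots> = - (1 / N) * ln L" by simp
      finally have "C - ln K / N \<le> - (1 / N) * ln L" .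
      moreover have "ln K / N < C - a" using elim unfolding N_def by simp
      ultimately show ?case unfolding L_def N_def by linarith
    qed
  }
  {
    fix b assume b: "wCM \<mu> \<phi> p M < b"
    define \<eta> where "\<eta> = (b - C) / 2"
    have eta: "0 < \<eta>" unfolding \<eta>_def C_def using b by simp
    define c where "c = - ln (wmin / 2)"
    have ev1: "\<forall>\<^sub>F n in sequentially. c / real n < \<eta>"
      using order_tendstoD(2)[OF lim_const_over_n[of c] eta] by simp
    show "\<forall>\<^sub>F n in sequentially. - (1 / real n) * ln (Lstar_w \<mu> \<phi> p M w n) < b"
      using lower_final[OF eta] ev1 eventually_gt_at_top[of 0]
    proof eventually_elim
      case (elim n)
      define L where "L = Lstar_w \<mu> \<phi> p M w n"
      define N where "N = real n"
      have N0: "0 < N" unfolding N_def using elim by simp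
      have lo: "wmin * (exp (- (N * (C + \<eta>))) / 2) \<le> L" using elim unfolding L_def N_def C_def by simp
      have lo0: "0 < wmin * (exp (- (N * (C + \<eta>))) / 2)" using wmin_pos by simp
      have "ln (wmin * (exp (- (N * (C + \<eta>))) / 2)) \<le> ln L" using lo lo0 by simp
      moreover have "ln (wmin * (exp (- (N * (C + \<eta>))) / 2)) = - c - N * (C + \<eta>)"
        unfolding c_def using wmin_pos by (simp add: ln_mult ln_div)
      ultimately have lnL: "- c - N * (C + \<eta>) \<le> ln L" by simp
      have "- (1 / N) * ln L = (- ln L) / N" by simp
      also have "\<dots> \<le> (c + N * (C + \<eta>)) / N" using lnL N0 by (intro divide_right_mono) auto
      also have "\<dots> = c / N + (C + \<eta>)" using N0 by (simp add: field_simps)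
      finally have "- (1 / N) * ln L \<le> c / N + (C + \<eta>)" .
      moreover have "c / N < \<eta>" using elim unfolding N_def by simp
      moreover have "C + 2 * \<eta> = b" unfolding \<eta>_def by (simp add: field_simps)
      ultimately show ?case unfolding L_def N_def by linarith
    qed
  }
qed
end


theorem mainTheorem13:
  fixes \<mu> :: "'a::polish_space measure"
    and p :: "nat \<Rightarrow> 'a \<Rightarrow> real"
    and \<phi> :: "'a \<Rightarrow> real"
    and w :: "nat \<Rightarrow> real"
    and M :: nat
  assumes M2: "M \<ge> 2"
    and sets_mu: "sets \<mu> = sets borel"
    and sfin: "sigma_finite_measure \<mu>"
    and p_meas: "\<And>i. i \<in> {1..M} \<Longrightarrow> p i \<in> borel_measurable \<mu>"
    and p_pos: "\<And>i x. i \<in> {1..M} \<Longrightarrow> p i x > 0"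
    and p_prob: "\<And>i. i \<in> {1..M} \<Longrightarrow> (\<integral>\<^sup>+ x. ennreal (p i x) \<partial>\<mu>) = 1"
    and phi_meas: "\<phi> \<in> borel_measurable \<mu>"
    and phi_nonneg: "\<And>x. \<phi> x \<ge> 0"
    and rho_fin: "\<And>i j \<alpha>. 1 \<le> i \<Longrightarrow> i < j \<Longrightarrow> j \<le> M \<Longrightarrow> \<alpha> \<in> {0..1} \<Longrightarrow>
                    0 < wrho \<mu> \<phi> (p i) (p j) \<alpha> \<and> wrho \<mu> \<phi> (p i) (p j) \<alpha> < \<infinity>"
    and w_pos: "\<And>i. i \<in> {1..M} \<Longrightarrow> w i > 0"
    and w_sum: "(\<Sum>i\<in>{1..M}. w i) = 1"
  shows "(\<forall>n. (MIN i\<in>{1..M}. w i) * Lstar \<mu> \<phi> p M n \<le> Lstar_w \<mu> \<phi> p M w n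
            \<and> Lstar_w \<mu> \<phi> p M w n \<le> (MAX i\<in>{1..M}. w i) * Lstar \<mu> \<phi> p M n)
         \<and> (\<lambda>n. - (1 / real n) * ln (Lstar_w \<mu> \<phi> p M w n)) \<longlonglongrightarrow> wCM \<mu> \<phi> p M"
proof -
  interpret X: mainctx \<mu> p \<phi> w M
    by (rule mainctx.intro[OF M2 sets_mu sfin p_meas p_pos p_prob phi_meas phi_nonneg rho_fin w_pos w_sum])
  show ?thesis using X.part1 X.limit unfolding X.wmin_def X.wmax_def by blast
qed

end
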